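(* Let $p$ be an even positive integer and $\mathbb{H}$ any real Hilbert space (of dimension at least $2$). Let $T\in\mathbb{L}(\mathbb{H},\ell_p^2)$ be of rank one with $\|T\|=1$. Then $T$ is not an extreme contraction.
   Context: $\ell_p^2$ is $\mathbb{R}^2$ with norm $\|(a,b)\|=(|a|^p+|b|^p)^{1/p}$. An extreme contraction is a norm one operator that is an extreme point of the closed unit ball of $\mathbb{L}(\mathbb{H},\ell_p^2)$ (bounded linear operators, operator norm). *)

theory Defs
  imports "HOL-Analysis.Analysis"
begin

text \<open>The p-norm on the real plane: ell_p^2 is real x real with this norm.\<close>
definition lp2_norm :: "nat \<Rightarrow> real \<times> real \<Rightarrow> real" where
  "lp2_norm p v = (\<bar>fst v\<bar> powr real p + \<bar>snd v\<bar> powr real p) powr (1 / real p)"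

definition op_norm_lp :: "nat \<Rightarrow> ('a::real_normed_vector \<Rightarrow> real \<times> real) \<Rightarrow> real" where
  "op_norm_lp p T = (SUP x\<in>{x. norm x \<le> 1}. lp2_norm p (T x))"

text \<open>Closed unit ball of the space of bounded linear operators L(H, ell_p^2).
  (Boundedness does not depend on which norm is put on the 2-dimensional codomain.)\<close>
definition op_unit_ball :: "nat \<Rightarrow> ('a::real_normed_vector \<Rightarrow> real \<times> real) set" where
  "op_unit_ball p = {S. bounded_linear S \<and> op_norm_lp p S \<le> 1}"

definition extreme_contraction :: "nat \<Rightarrow> ('a::real_normed_vector \<Rightarrow> real \<times> real) \<Rightarrow> bool" where
  "extreme_contraction p T \<longleftrightarrow>
     bounded_linear T \<and> op_norm_lp p T = 1 \<and>
     \<not> (\<exists>S1\<in>op_unit_ball p. \<exists>S2\<in>op_unit_ball p. \<exists>t::real. 0 < t \<and> t < 1 \<and> S1 \<noteq> S2 \<and>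
           T = (\<lambda>x. t *\<^sub>R S1 x + (1 - t) *\<^sub>R S2 x))"

end

theory Submission
  imports Defs
begin

lemma R_bound:
  fixes x y :: real
  assumes "\<bar>x\<bar> \<le> 1" "\<bar>y\<bar> \<le> 1"
  shows "\<bar>(x+y)^n - x^n - real n * x^(n-1) * y\<bar> \<le> real n * 2^n * y^2"
proof (induction n)
  case 0
  then show ?case by simp
next
  case (Suc n)
  have id: "(x+y)^(Suc n) - x^(Suc n) - real (Suc n) * x^(Suc n - 1) * y
      = (x+y) * ((x+y)^n - x^n - real n * x^(n-1) * y) + real n * x^(n-1) * y^2"
  proof (cases n)
    case 0 then show ?thesis by simp
  next
    case (Suc m) then show ?thesis by (simp add: algebra_simps power2_eq_square)
  qed
  have a: "\<bar>(x+y) * ((x+y)^n - x^n - real n * x^(n-1) * y)\<bar> \<le> 2 * (real n * 2^n * y^2)"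
  proof -
    have "\<bar>x+y\<bar> \<le> 2" using assms by linarith
    then show ?thesis unfolding abs_mult using Suc.IH
      by (intro mult_mono) auto
  qed
  have b: "\<bar>real n * x^(n-1) * y^2\<bar> \<le> real n * y^2"
  proof -
    have "\<bar>x^(n-1)\<bar> \<le> 1" using assms by (simp add: power_abs power_le_one)
    then have "\<bar>x^(n-1)\<bar> * y^2 \<le> y^2" by (simp add: mult_left_le_one_le)
    then have "real n * (\<bar>x^(n-1)\<bar> * y^2) \<le> real n * y^2" by (simp add: mult_left_mono)
    then show ?thesis unfolding abs_mult by (simp add: mult.assoc)
  qed
  have "real n * y^2 \<le> 2^n * y^2" 
    by (intro mult_right_mono) (auto simp: of_nat_less_two_power less_imp_le)
  moreover have "\<bar>(x+y) * ((x+y)^n - x^n - real n * x^(n-1) * y) + real n * x^(n-1) * y^2\<bar>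
     \<le> \<bar>(x+y) * ((x+y)^n - x^n - real n * x^(n-1) * y)\<bar> + \<bar>real n * x^(n-1) * y^2\<bar>"
    by (rule abs_triangle_ineq)
  moreover have "2 * (real n * 2^n * y^2) + 2^n * y^2 \<le> real (Suc n) * 2^(Suc n) * y^2"
    by (simp add: algebra_simps)
  ultimately show ?case unfolding id using a b by linarith
qed

lemma key_poly:
  fixes p :: nat and w1 w2 e a b :: real
  assumes ev: "even p" and pp: "p > 0" and w: "w1^p + w2^p = 1"
    and e: "0 < e" "e \<le> 1" "2 * real p * 2^p * e^2 \<le> 1"
    and ab: "a^2 + b^2 \<le> 1"
  shows "(a*w1 + b*(e*(-(w2^(p-1)))))^p + (a*w2 + b*(e*w1^(p-1)))^p \<le> 1"
proof -
  have w1p: "w1^p \<ge> 0" "w2^p \<ge> 0" using ev by (auto simp: zero_le_even_power)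
  have "\<bar>w1\<bar>^p \<le> 1" using w w1p ev by (simp add: power_even_abs)
  then have w1: "\<bar>w1\<bar> \<le> 1" using pp power_le_one_iff[of "\<bar>w1\<bar>" p] by simp
  have "\<bar>w2\<bar>^p \<le> 1" using w w1p ev by (simp add: power_even_abs)
  then have w2: "\<bar>w2\<bar> \<le> 1" using pp power_le_one_iff[of "\<bar>w2\<bar>" p] by simp
  have a1: "\<bar>a\<bar> \<le> 1" using ab abs_square_le_1[of a] zero_le_power2[of b] by linarith
  have b1: "\<bar>b\<bar> \<le> 1" using ab abs_square_le_1[of b] zero_le_power2[of a] by linarith
  have pw1: "\<bar>w1^(p-1)\<bar> \<le> 1" using w1 by (simp add: power_abs power_le_one)
  have pw2: "\<bar>w2^(p-1)\<bar> \<le> 1" using w2 by (simp add: power_abs power_le_one)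
  define x1 where "x1 = a*w1"
  define y1 where "y1 = b*(e*(-(w2^(p-1))))"
  define x2 where "x2 = a*w2"
  define y2 where "y2 = b*(e*w1^(p-1))"
  have hx1: "\<bar>x1\<bar> \<le> 1" unfolding x1_def abs_mult using a1 w1 by (simp add: mult_le_one)
  have hx2: "\<bar>x2\<bar> \<le> 1" unfolding x2_def abs_mult using a1 w2 by (simp add: mult_le_one)
  have hy1: "y1^2 \<le> b^2 * e^2"
  proof -
    have "y1^2 = b^2 * e^2 * (w2^(p-1))^2" unfolding y1_def by (simp add: power_mult_distrib)
    moreover have "(w2^(p-1))^2 \<le> 1" using pw2 abs_square_le_1 by blast
    ultimately show ?thesis by (simp add: mult_left_le)
  qed
  have hy2: "y2^2 \<le> b^2 * e^2"
  proof -
    have "y2^2 = b^2 * e^2 * (w1^(p-1))^2" unfolding y2_def by (simp add: power_mult_distrib)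
    moreover have "(w1^(p-1))^2 \<le> 1" using pw1 abs_square_le_1 by blast
    ultimately show ?thesis by (simp add: mult_left_le)
  qed
  have hy1': "\<bar>y1\<bar> \<le> 1" unfolding y1_def abs_mult using b1 e pw1 pw2
    by (simp add: mult_le_one)
  have hy2': "\<bar>y2\<bar> \<le> 1" unfolding y2_def abs_mult using b1 e pw1 pw2
    by (simp add: mult_le_one)
  have r1: "(x1+y1)^p \<le> x1^p + real p * x1^(p-1) * y1 + real p * 2^p * y1^2"
    using R_bound[OF hx1 hy1', of p] by linarith
  have r2: "(x2+y2)^p \<le> x2^p + real p * x2^(p-1) * y2 + real p * 2^p * y2^2"
    using R_bound[OF hx2 hy2', of p] by linarith
  have s0: "x1^p + x2^p = a^p"
    unfolding x1_def x2_def by (simp add: power_mult_distrib flip: distrib_left w)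
  have s1: "real p * x1^(p-1) * y1 + real p * x2^(p-1) * y2 = 0"
    unfolding x1_def x2_def y1_def y2_def by (simp add: power_mult_distrib algebra_simps)
  have s2: "real p * 2^p * y1^2 + real p * 2^p * y2^2 \<le> b^2"
  proof -
    have "real p * 2^p * y1^2 + real p * 2^p * y2^2 = real p * 2^p * (y1^2 + y2^2)" by algebra
    also have "\<dots> \<le> real p * 2^p * (2 * b^2 * e^2)"
      using hy1 hy2 by (intro mult_left_mono) auto
    also have "\<dots> = b^2 * (2 * real p * 2^p * e^2)" by algebra
    also have "\<dots> \<le> b^2" using e by (simp add: mult_left_le)
    finally show ?thesis .
  qed
  have ap: "a^p \<le> a^2"
  proof -
    obtain k where k: "p = 2*k" using ev by auto
    have "k \<ge> 1" using pp k by simp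
    have "a^p = (a^2)^k" using k by (simp add: power_mult)
    also have "\<dots> \<le> (a^2)^1" using \<open>k \<ge> 1\<close> a1
      by (intro power_decreasing) (auto simp: abs_square_le_1)
    finally show ?thesis by simp
  qed
  have "(x1+y1)^p + (x2+y2)^p \<le> 1" using r1 r2 s0 s1 s2 ap ab by linarith
  then show ?thesis unfolding x1_def x2_def y1_def y2_def .
qed

lemma abs_powr_even:
  fixes a :: real
  assumes "even p" "p > 0"
  shows "\<bar>a\<bar> powr real p = a^p"
  using assms powr_realpow'[of "\<bar>a\<bar>" p] by (simp add: power_even_abs)

lemma lp2_le1:
  assumes "even p" "p > 0" "fst v ^ p + snd v ^ p \<le> 1"
  shows "lp2_norm p v \<le> 1"
proof -
  have "lp2_norm p v = (fst v ^ p + snd v ^ p) powr (1 / real p)"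
    unfolding lp2_norm_def using assms by (simp add: abs_powr_even)
  also have "\<dots> \<le> 1 powr (1 / real p)"
    using assms by (intro powr_mono2) (auto simp: zero_le_even_power)
  finally show ?thesis by simp
qed

lemma lp2_eq1:
  assumes "even p" "p > 0" "lp2_norm p v = 1"
  shows "fst v ^ p + snd v ^ p = 1"
proof -
  define S where "S = fst v ^ p + snd v ^ p"
  have S0: "S \<ge> 0" unfolding S_def using assms by (auto simp: zero_le_even_power)
  have "S powr (1 / real p) = 1" using assms unfolding lp2_norm_def S_def by (simp add: abs_powr_even)
  then have "(S powr (1 / real p)) powr real p = 1" by simp
  then show ?thesis using assms S0 by (simp add: powr_powr S_def)
qed

lemma lp2_nonneg: "lp2_norm p v \<ge> 0"
  unfolding lp2_norm_def by simp

lemma lp2_scale: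
  assumes "p > 0"
  shows "lp2_norm p (c *\<^sub>R v) = \<bar>c\<bar> * lp2_norm p v"
proof -
  have "lp2_norm p (c *\<^sub>R v) = (\<bar>c\<bar> powr real p * (\<bar>fst v\<bar> powr real p + \<bar>snd v\<bar> powr real p)) powr (1 / real p)"
    unfolding lp2_norm_def by (simp add: abs_mult powr_mult algebra_simps)
  also have "\<dots> = (\<bar>c\<bar> powr real p) powr (1 / real p) * lp2_norm p v"
    unfolding lp2_norm_def by (simp add: powr_mult)
  also have "(\<bar>c\<bar> powr real p) powr (1 / real p) = \<bar>c\<bar>"
    using assms by (simp add: powr_powr)
  finally show ?thesis .
qed

lemma lp2_pos:
  assumes "even p" "p > 0" "v \<noteq> 0"
  shows "lp2_norm p v > 0"
proof -
  define S where "S = fst v ^ p + snd v ^ p"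
  have a: "fst v ^ p \<ge> 0" "snd v ^ p \<ge> 0" using assms by (auto simp: zero_le_even_power)
  have "S \<noteq> 0"
  proof
    assume "S = 0"
    then have "fst v ^ p = 0" "snd v ^ p = 0" using a unfolding S_def by linarith+
    then have "v = 0" by (simp add: prod_eq_iff)
    then show False using assms by simp
  qed
  then have "S > 0" using a unfolding S_def by linarith
  then show ?thesis unfolding lp2_norm_def using assms by (simp add: abs_powr_even S_def)
qed

lemma half_comb:
  fixes a b :: "'b::real_vector"
  shows "(1/2::real) *\<^sub>R (a + b) + (1 - 1/2) *\<^sub>R (a - b) = a"
proof -
  have "(1/2::real) *\<^sub>R (a + b) + (1 - 1/2) *\<^sub>R (a - b) = (1/2::real) *\<^sub>R a + (1/2::real) *\<^sub>R a"
    by (simp add: scaleR_add_right scaleR_diff_right)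
  also have "\<dots> = (1/2 + 1/2::real) *\<^sub>R a" by (simp only: scaleR_add_left)
  finally show ?thesis by simp
qed

theorem mainTheorem13:
  fixes p :: nat and T :: "'a::{real_inner, complete_space} \<Rightarrow> real \<times> real"
  assumes "even p" and "p > 0"
    and "\<exists>u v :: 'a. u \<noteq> v \<and> independent {u, v}"
    and "bounded_linear T"
    and "dim (range T) = 1"
    and "op_norm_lp p T = 1"
  shows "\<not> extreme_contraction p T"
proof -
  note ev = assms(1) and pp = assms(2) and blT = assms(4)
  obtain B where B: "B \<subseteq> range T" "independent B" "range T \<subseteq> span B" "card B = 1"
    using basis_exists[of "range T"] assms(5) by metis
  then obtain w0 where Bw: "B = {w0}" by (auto simp: card_1_singleton_iff)
  have w00: "w0 \<noteq> 0" using B(2) Bw by auto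
  have Tc: "\<exists>c. T x = c *\<^sub>R w0" for x
  proof -
    have "T x \<in> span {w0}" using B(3) Bw by auto
    then show ?thesis by (auto simp: span_singleton)
  qed
  define L where "L = lp2_norm p w0"
  have L0: "L > 0" unfolding L_def using lp2_pos[OF ev pp w00] .
  define w where "w = (1 / L) *\<^sub>R w0"
  have wn: "lp2_norm p w = 1" unfolding w_def using L0 lp2_scale[OF pp] by (simp add: L_def)
  have ww0: "w0 \<bullet> w0 > 0" using w00 by simp
  define \<psi> where "\<psi> x = (T x \<bullet> w0) * (L / (w0 \<bullet> w0))" for x
  have bl\<psi>: "bounded_linear \<psi>"
    unfolding \<psi>_def
    by (intro bounded_linear_compose[OF bounded_linear_mult_left]
          bounded_linear_compose[OF bounded_linear_inner_left blT])
  have lin\<psi>: "linear \<psi>" using bounded_linear.linear[OF bl\<psi>] .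
  have Tpsi: "T x = \<psi> x *\<^sub>R w" for x
  proof -
    obtain c where c: "T x = c *\<^sub>R w0" using Tc by blast
    have "\<psi> x = c * L" unfolding \<psi>_def c using ww0 by simp
    then show ?thesis unfolding c w_def using L0 by simp
  qed
  have nT: "lp2_norm p (T x) = \<bar>\<psi> x\<bar>" for x
    unfolding Tpsi lp2_scale[OF pp] wn by simp
  obtain K where K: "\<And>x. norm (\<psi> x) \<le> norm x * K" "K > 0"
    using bounded_linear.pos_bounded[OF bl\<psi>] by blast
  have bdd: "bdd_above ((\<lambda>x. lp2_norm p (T x)) ` {x. norm x \<le> 1})"
  proof (rule bdd_aboveI2)
    fix x :: 'a assume "x \<in> {x. norm x \<le> 1}"
    then have "norm x * K \<le> 1 * K" using K by (intro mult_right_mono) auto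
    then show "lp2_norm p (T x) \<le> K" using K(1)[of x] nT[of x] by simp
  qed
  have psi1: "\<bar>\<psi> x\<bar> \<le> 1" if "norm x \<le> 1" for x
  proof -
    have "lp2_norm p (T x) \<le> op_norm_lp p T"
      unfolding op_norm_lp_def using that bdd by (intro cSUP_upper) auto
    then show ?thesis using assms(6) nT by simp
  qed
  have psin: "\<bar>\<psi> x\<bar> \<le> norm x" for x
  proof (cases "x = 0")
    case True then show ?thesis using linear_0[OF lin\<psi>] by simp
  next
    case False
    have "\<bar>\<psi> (x /\<^sub>R norm x)\<bar> \<le> 1" using False by (intro psi1) simp
    then have "\<bar>\<psi> x\<bar> / norm x \<le> 1" using linear_scale[OF lin\<psi>] False
      by (simp add: abs_mult divide_inverse mult.commute)
    then show ?thesis using False by (simp add: divide_le_eq)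
  qed
  obtain f0 where f0: "f0 \<noteq> 0" "\<psi> f0 = 0"
  proof -
    obtain u v :: 'a where uv: "u \<noteq> v" "independent {u, v}" using assms(3) by blast
    have u0: "u \<notin> span {v}" using uv by (simp add: independent_insert)
    have iv: "independent (insert v {u})" using uv(2) by (metis insert_commute)
    have v0: "v \<notin> span {u}" using iv uv(1) unfolding independent_insert[of v "{u}"] by auto
    have un: "u \<noteq> 0" using u0 span_zero by auto
    show ?thesis
    proof (cases "\<psi> u = 0")
      case True then show ?thesis using that un by blast
    next
      case False
      define kk where "kk = \<psi> v *\<^sub>R u - \<psi> u *\<^sub>R v"
      have "\<psi> kk = 0" unfolding kk_def
        using linear_diff[OF lin\<psi>] linear_scale[OF lin\<psi>] by simp
      moreover have "kk \<noteq> 0"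
      proof
        assume "kk = 0"
        then have eq: "\<psi> v *\<^sub>R u = \<psi> u *\<^sub>R v" unfolding kk_def by simp
        have "(1 / \<psi> u) *\<^sub>R (\<psi> v *\<^sub>R u) = v" unfolding eq using False by simp
        then have "v = (\<psi> v / \<psi> u) *\<^sub>R u" by simp
        then have "v \<in> span {u}" by (metis span_base span_scale insertI1)
        then show False using v0 by simp
      qed
      ultimately show ?thesis using that by blast
    qed
  qed
  define f where "f = f0 /\<^sub>R norm f0"
  have nf: "norm f = 1" unfolding f_def using f0 by simp
  have ff: "f \<bullet> f = 1" using nf by (simp add: norm_eq_1)
  have pf: "\<psi> f = 0" unfolding f_def using f0 linear_scale[OF lin\<psi>] by simp
  have disk: "(\<psi> x)^2 + (x \<bullet> f)^2 \<le> 1" if "norm x \<le> 1" for x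
  proof -
    define x' where "x' = x - (x \<bullet> f) *\<^sub>R f"
    have px: "\<psi> x' = \<psi> x" unfolding x'_def
      using linear_diff[OF lin\<psi>] linear_scale[OF lin\<psi>] pf by simp
    have nx: "(norm x')^2 = (norm x)^2 - (x \<bullet> f)^2"
      unfolding x'_def power2_norm_eq_inner using ff
      by (simp add: inner_diff_left inner_diff_right inner_commute power2_eq_square)
    have "(\<psi> x')^2 \<le> (norm x')^2" using psin[of x'] abs_le_square_iff[of "\<psi> x'" "norm x'"] by simp
    moreover have "(norm x)^2 \<le> 1" using that norm_ge_zero[of x] by (simp add: abs_square_le_1)
    ultimately have "(\<psi> x)^2 \<le> (norm x')^2" "(norm x)^2 \<le> 1" using px by simp_all
    then show ?thesis using nx by linarith
  qed
  define e :: real where "e = 1 / (2 * real p * 2^p + 1)"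
  have e: "0 < e" "e \<le> 1" "2 * real p * 2^p * e^2 \<le> 1"
  proof -
    define Q :: real where "Q = 2 * real p * 2^p"
    have Q0: "Q \<ge> 0" unfolding Q_def by simp
    have e': "e = 1 / (Q + 1)" unfolding e_def Q_def ..
    show "0 < e" "e \<le> 1" unfolding e' using Q0 by auto
    have "Q * e^2 = Q / (Q+1)^2" unfolding e_def Q_def by (simp add: power_divide)
    also have "\<dots> \<le> 1" using Q0 by (simp add: divide_le_eq power2_eq_square algebra_simps)
    finally show "2 * real p * 2^p * e^2 \<le> 1" unfolding Q_def .
  qed
  define z where "z = (e * (-(snd w ^ (p-1))), e * fst w ^ (p-1))"
  have wp: "fst w ^ p + snd w ^ p = 1" using lp2_eq1[OF ev pp wn] .
  define S1 where "S1 x = T x + (x \<bullet> f) *\<^sub>R z" for x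
  define S2 where "S2 x = T x - (x \<bullet> f) *\<^sub>R z" for x
  have blz: "bounded_linear (\<lambda>x. (x \<bullet> f) *\<^sub>R z)"
    by (intro bounded_linear_compose[OF bounded_linear_scaleR_left bounded_linear_inner_left])
  have bl1: "bounded_linear S1" unfolding S1_def by (intro bounded_linear_add blT blz)
  have bl2: "bounded_linear S2" unfolding S2_def by (intro bounded_linear_sub blT blz)
  have n1: "lp2_norm p (S1 x) \<le> 1" if "norm x \<le> 1" for x
  proof (rule lp2_le1[OF ev pp])
    have "(\<psi> x * fst w + (x \<bullet> f) * (e * (-(snd w ^ (p-1)))))^p + (\<psi> x * snd w + (x \<bullet> f) * (e * fst w ^ (p-1)))^p \<le> 1"
      by (rule key_poly[OF ev pp wp e disk[OF that]])
    then show "fst (S1 x) ^ p + snd (S1 x) ^ p \<le> 1" unfolding S1_def Tpsi z_def by simp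
  qed
  have n2: "lp2_norm p (S2 x) \<le> 1" if "norm x \<le> 1" for x
  proof (rule lp2_le1[OF ev pp])
    have d: "(\<psi> x)^2 + (-(x \<bullet> f))^2 \<le> 1" using disk[OF that] by simp
    have "(\<psi> x * fst w + (-(x \<bullet> f)) * (e * (-(snd w ^ (p-1)))))^p + (\<psi> x * snd w + (-(x \<bullet> f)) * (e * fst w ^ (p-1)))^p \<le> 1"
      by (rule key_poly[OF ev pp wp e d])
    then show "fst (S2 x) ^ p + snd (S2 x) ^ p \<le> 1" unfolding S2_def Tpsi z_def by simp
  qed
  have o1: "S1 \<in> op_unit_ball p"
  proof -
    have z0: "(0::'a) \<in> {x::'a. norm x \<le> 1}" by simp
    have ne: "{x::'a. norm x \<le> 1} \<noteq> {}" using z0 by blast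
    have "op_norm_lp p S1 \<le> 1" unfolding op_norm_lp_def
      by (rule cSUP_least[OF ne]) (use n1 in auto)
    then show ?thesis unfolding op_unit_ball_def using bl1 by simp
  qed
  have o2: "S2 \<in> op_unit_ball p"
  proof -
    have z0: "(0::'a) \<in> {x::'a. norm x \<le> 1}" by simp
    have ne: "{x::'a. norm x \<le> 1} \<noteq> {}" using z0 by blast
    have "op_norm_lp p S2 \<le> 1" unfolding op_norm_lp_def
      by (rule cSUP_least[OF ne]) (use n2 in auto)
    then show ?thesis unfolding op_unit_ball_def using bl2 by simp
  qed
  have zne: "z \<noteq> 0"
  proof
    assume "z = 0"
    then have "fst z = 0" "snd z = 0" by simp_all
    then have "snd w ^ (p-1) = 0" "fst w ^ (p-1) = 0" unfolding z_def using e by auto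
    then have "snd w = 0" "fst w = 0" by (auto simp: power_eq_0_iff)
    then show False using wp pp by (simp add: zero_power)
  qed
  have S12: "S1 \<noteq> S2"
  proof
    assume "S1 = S2"
    then have "S1 f = S2 f" by simp
    then have "z + z = 0" unfolding S1_def S2_def ff by (simp add: algebra_simps)
    then have "2 *\<^sub>R z = 0" by (simp add: scaleR_2)
    then show False using zne by simp
  qed
  have Teq: "T = (\<lambda>x. (1/2::real) *\<^sub>R S1 x + (1 - 1/2) *\<^sub>R S2 x)"
    unfolding S1_def S2_def by (rule ext) (rule half_comb[symmetric])
  have "\<exists>S1\<in>op_unit_ball p. \<exists>S2\<in>op_unit_ball p. \<exists>t::real. 0 < t \<and> t < 1 \<and> S1 \<noteq> S2 \<and>
           T = (\<lambda>x. t *\<^sub>R S1 x + (1 - t) *\<^sub>R S2 x)"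
  proof (intro bexI exI conjI)
    show "0 < (1/2::real)" "(1/2::real) < 1" by simp_all
    show "S1 \<noteq> S2" by (rule S12)
    show "T = (\<lambda>x. (1/2::real) *\<^sub>R S1 x + (1 - 1/2) *\<^sub>R S2 x)" by (rule Teq)
  qed (rule o2, rule o1)
  then show ?thesis unfolding extreme_contraction_def by blast
qed

end
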